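(* Let $\rho_{AB}$ be positive semidefinite on $\mathcal{H}_A\otimes\mathcal{H}_B$ with $0<\operatorname{tr}\rho_{AB}\le1$, and let $\sigma_B$ be a normalized density operator on $\mathcal{H}_B$. Then $$D_{\max}(\rho_{AB}\|\mathbb{1}_A\otimes\sigma_B)\ge\log\Gamma_C(\rho_{AB}|\sigma_B)-\log\operatorname{tr}\rho_{AB}.$$
   Context: Hilbert spaces are finite-dimensional; $\log$ is binary; inverses are generalized inverses (on the support). $D_{\max}(\rho\|\tau)=\inf\{\lambda\in\mathbb{R}:\rho\le2^\lambda\tau\}$. $\Gamma_C(\rho_{AB}|\sigma_B):=\operatorname{tr}\big((\rho_{AB}(\mathbb{1}_A\otimes\sigma_B^{-1/2}))^2\big)$. *)

theory Defs
  imports "HOL-Library.Extended_Real" "Jordan_Normal_Form.Matrix"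
begin

definition trace :: "complex mat \<Rightarrow> complex" where
  "trace A = (\<Sum>i<dim_row A. A $$ (i,i))"

definition adj :: "complex mat \<Rightarrow> complex mat" where
  "adj A = mat (dim_col A) (dim_row A) (\<lambda>(i,j). cnj (A $$ (j,i)))"

definition psd :: "nat \<Rightarrow> complex mat \<Rightarrow> bool" where
  "psd n A \<longleftrightarrow> A \<in> carrier_mat n n \<and>
     (\<forall>v \<in> carrier_vec n. let q = map_vec cnj v \<bullet> (A *\<^sub>v v) in Im q = 0 \<and> Re q \<ge> 0)"

definition loewner_le :: "nat \<Rightarrow> complex mat \<Rightarrow> complex mat \<Rightarrow> bool" where
  "loewner_le n A B \<longleftrightarrow> A \<in> carrier_mat n n \<and> B \<in> carrier_mat n n \<and> psd n (B - A)"

(* Kronecker (tensor) product, H_A \<otimes> H_B with index (a,b) \<mapsto> a * dim_B + b *)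
definition kron :: "complex mat \<Rightarrow> complex mat \<Rightarrow> complex mat" where
  "kron A B = mat (dim_row A * dim_row B) (dim_col A * dim_col B)
     (\<lambda>(i,j). A $$ (i div dim_row B, j div dim_col B) * B $$ (i mod dim_row B, j mod dim_col B))"

definition diag_real :: "nat \<Rightarrow> (nat \<Rightarrow> real) \<Rightarrow> complex mat" where
  "diag_real n d = mat n n (\<lambda>(i,j). if i = j then complex_of_real (d i) else 0)"

definition unitary :: "nat \<Rightarrow> complex mat \<Rightarrow> bool" where
  "unitary n U \<longleftrightarrow> U \<in> carrier_mat n n \<and> U * adj U = 1\<^sub>m n \<and> adj U * U = 1\<^sub>m n"

(* generalized inverse square root (inverse on the support), via spectral decomposition *)
definition inv_sqrt :: "complex mat \<Rightarrow> complex mat" where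
  "inv_sqrt S = (SOME X. \<exists>U d. unitary (dim_row S) U \<and>
       S = U * diag_real (dim_row S) d * adj U \<and>
       X = U * diag_real (dim_row S) (\<lambda>i. if d i > 0 then 1 / sqrt (d i) else 0) * adj U)"

definition D_max :: "nat \<Rightarrow> complex mat \<Rightarrow> complex mat \<Rightarrow> ereal" where
  "D_max n \<rho> \<tau> = Inf {ereal l | l. loewner_le n \<rho> (complex_of_real (2 powr l) \<cdot>\<^sub>m \<tau>)}"

definition Gamma_C :: "nat \<Rightarrow> complex mat \<Rightarrow> complex mat \<Rightarrow> complex" where
  "Gamma_C dA \<rho> \<sigma> = (let M = \<rho> * kron (1\<^sub>m dA) (inv_sqrt \<sigma>) in trace (M * M))"

end

theory Submission
  imports Defs "Jordan_Normal_Form.Spectral_Radius"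
begin

lemma adj_carrier[simp]: "A \<in> carrier_mat r c \<Longrightarrow> adj A \<in> carrier_mat c r"
  unfolding adj_def by auto
lemma adj_dims[simp]: "dim_row (adj A) = dim_col A" "dim_col (adj A) = dim_row A"
  unfolding adj_def by auto
lemma adj_index[simp]: "i < dim_col A \<Longrightarrow> j < dim_row A \<Longrightarrow> adj A $$ (i,j) = cnj (A $$ (j,i))"
  unfolding adj_def by auto
lemma adj_adj[simp]: "adj (adj A) = A"
  by (rule eq_matI, auto)
lemma adj_mult: assumes "A \<in> carrier_mat n m" "B \<in> carrier_mat m p"
  shows "adj (A * B) = adj B * adj A"
  using assms by (intro eq_matI) (auto simp: scalar_prod_def mult.commute)
lemma adj_one[simp]: "adj (1\<^sub>m n) = 1\<^sub>m n"
  by (rule eq_matI, auto)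
lemma adj_diag_real[simp]: "adj (diag_real n d) = diag_real n d"
  unfolding diag_real_def by (rule eq_matI, auto)
lemma adj_minus: assumes "A \<in> carrier_mat n m" "B \<in> carrier_mat n m"
  shows "adj (A - B) = adj A - adj B"
  using assms by (intro eq_matI) auto
lemma adj_smult_real: "adj (complex_of_real c \<cdot>\<^sub>m A) = complex_of_real c \<cdot>\<^sub>m adj A"
  by (intro eq_matI) auto

lemma inner_adj: assumes A: "A \<in> carrier_mat n m" and v: "v \<in> carrier_vec n" and w: "w \<in> carrier_vec m"
  shows "map_vec cnj v \<bullet> (A *\<^sub>v w) = map_vec cnj (adj A *\<^sub>v v) \<bullet> w"
proof -
  have "map_vec cnj v \<bullet> (A *\<^sub>v w) = (\<Sum>i<n. cnj (v$i) * (\<Sum>j<m. A$$(i,j) * w$j))"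
    using A v w by (simp add: scalar_prod_def mult_mat_vec_def lessThan_atLeast0)
  also have "\<dots> = (\<Sum>i<n. \<Sum>j<m. cnj (v$i) * A$$(i,j) * w$j)"
    by (simp add: sum_distrib_left mult.assoc)
  also have "\<dots> = (\<Sum>j<m. \<Sum>i<n. cnj (v$i) * A$$(i,j) * w$j)"
    by (rule sum.swap)
  also have "\<dots> = (\<Sum>j<m. cnj (\<Sum>i<n. cnj (A$$(i,j)) * v$i) * w$j)"
    by (simp add: sum_distrib_left sum_distrib_right mult_ac)
  also have "\<dots> = map_vec cnj (adj A *\<^sub>v v) \<bullet> w"
    using A v w by (simp add: scalar_prod_def mult_mat_vec_def lessThan_atLeast0)
  finally show ?thesis .
qed

definition hermitian :: "complex mat \<Rightarrow> bool" where "hermitian A \<longleftrightarrow> adj A = A"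

lemma trace_comm: assumes "A \<in> carrier_mat n m" "B \<in> carrier_mat m n"
  shows "trace (A * B) = trace (B * A)"
proof -
  have "trace (A * B) = (\<Sum>i<n. \<Sum>j<m. A$$(i,j) * B$$(j,i))"
    using assms by (simp add: trace_def scalar_prod_def lessThan_atLeast0)
  also have "\<dots> = (\<Sum>j<m. \<Sum>i<n. B$$(j,i) * A$$(i,j))"
    by (subst sum.swap) (simp add: mult.commute)
  also have "\<dots> = trace (B * A)"
    using assms by (simp add: trace_def scalar_prod_def lessThan_atLeast0)
  finally show ?thesis .
qed

lemma qf_sum: assumes A: "A \<in> carrier_mat n n" and v: "v \<in> carrier_vec n"
  shows "map_vec cnj v \<bullet> (A *\<^sub>v v) = (\<Sum>k<n. \<Sum>l<n. cnj (v$k) * A$$(k,l) * v$l)"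
  using A v by (simp add: scalar_prod_def mult_mat_vec_def lessThan_atLeast0 sum_distrib_left mult.assoc)

lemma sum_two: fixes g :: "nat \<Rightarrow> complex"
  assumes i: "i < n" and j: "j < n" and ij: "i \<noteq> j"
  shows "(\<Sum>l<n. g l * (if l = i then 1 else if l = j then c else 0)) = g i + g j * c"
proof -
  have "(\<Sum>l<n. g l * (if l = i then 1 else if l = j then c else 0))
      = (\<Sum>l<n. (if l = i then g i else 0) + (if l = j then g j * c else 0))"
    by (rule sum.cong[OF refl]) (use ij in auto)
  also have "\<dots> = g i + g j * c" using i j by (simp add: sum.distrib)
  finally show ?thesis .
qed
lemma sum_two': fixes g :: "nat \<Rightarrow> complex"
  assumes i: "i < n" and j: "j < n" and ij: "i \<noteq> j"
  shows "(\<Sum>l<n. cnj (if l = i then 1 else if l = j then c else 0) * g l) = g i + cnj c * g j"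
proof -
  have "(\<Sum>l<n. cnj (if l = i then 1 else if l = j then c else 0) * g l)
      = (\<Sum>l<n. (if l = i then g i else 0) + (if l = j then cnj c * g j else 0))"
    by (rule sum.cong[OF refl]) (use ij in auto)
  also have "\<dots> = g i + cnj c * g j" using i j by (simp add: sum.distrib)
  finally show ?thesis .
qed
lemma diag_mult_vec: assumes u: "u \<in> carrier_vec n"
  shows "diag_real n h *\<^sub>v u = vec n (\<lambda>k. complex_of_real (h k) * u$k)"
proof (rule eq_vecI)
  fix k assume "k < dim_vec (vec n (\<lambda>k. complex_of_real (h k) * u$k))"
  hence k: "k < n" by simp
  have "(diag_real n h *\<^sub>v u) $ k = (\<Sum>i = 0..<n. (if k = i then complex_of_real (h k) else 0) * u $ i)"
    using k u by (simp add: diag_real_def scalar_prod_def)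
  also have "\<dots> = (\<Sum>i = 0..<n. if k = i then complex_of_real (h k) * u $ k else 0)"
    by (rule sum.cong) auto
  also have "\<dots> = complex_of_real (h k) * u$k" using k by simp
  finally show "(diag_real n h *\<^sub>v u) $ k = vec n (\<lambda>k. complex_of_real (h k) * u$k) $ k" using k by simp
qed (auto simp: diag_real_def)
lemma qf_two: assumes A: "A \<in> carrier_mat n n" and i: "i < n" and j: "j < n" and ij: "i \<noteq> j"
  shows "map_vec cnj (vec n (\<lambda>k. if k = i then 1 else if k = j then c else 0)) \<bullet>
      (A *\<^sub>v vec n (\<lambda>k. if k = i then 1 else if k = j then c else 0))
    = A$$(i,i) + c * A$$(i,j) + cnj c * A$$(j,i) + cnj c * c * A$$(j,j)"
proof -
  let ?v = "vec n (\<lambda>k. if k = i then 1 else if k = j then c else 0)"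
  have "map_vec cnj ?v \<bullet> (A *\<^sub>v ?v) = (\<Sum>k<n. cnj (if k=i then 1 else if k=j then c else 0) *
      (\<Sum>l<n. A$$(k,l) * (if l=i then 1 else if l=j then c else 0)))"
    using A by (simp add: scalar_prod_def mult_mat_vec_def lessThan_atLeast0)
  also have "\<dots> = (\<Sum>k<n. cnj (if k=i then 1 else if k=j then c else 0) * (A$$(k,i) + A$$(k,j) * c))"
    by (simp only: sum_two[OF i j ij])
  also have "\<dots> = (A$$(i,i) + A$$(i,j) * c) + cnj c * (A$$(j,i) + A$$(j,j) * c)"
    by (rule sum_two'[OF i j ij])
  finally show ?thesis by (simp add: algebra_simps)
qed

lemma psd_hermitian: assumes "psd n A" shows "hermitian A"
proof -
  have A: "A \<in> carrier_mat n n" using assms unfolding psd_def by auto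
  have real: "Im (map_vec cnj v \<bullet> (A *\<^sub>v v)) = 0" if "v \<in> carrier_vec n" for v
    using assms that unfolding psd_def Let_def by auto
  have diag: "Im (A$$(i,i)) = 0" if i: "i < n" for i
  proof -
    have e: "map_vec cnj (unit_vec n i) = unit_vec n i" by (rule eq_vecI, auto simp: unit_vec_def)
    have c: "A *\<^sub>v unit_vec n i = col A i" using A i by (intro eq_vecI, auto)
    have "map_vec cnj (unit_vec n i) \<bullet> (A *\<^sub>v unit_vec n i) = A$$(i,i)"
      unfolding e c using A i by simp
    thus ?thesis using real[of "unit_vec n i"] i by auto
  qed
  have herm: "A$$(i,j) = cnj (A$$(j,i))" if i: "i < n" and j: "j < n" for i j
  proof (cases "i = j")
    case True thus ?thesis using diag[OF i] by (simp add: complex_eq_iff)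
  next
    case False
    have 1: "Im (A$$(i,i) + 1 * A$$(i,j) + cnj 1 * A$$(j,i) + cnj 1 * 1 * A$$(j,j)) = 0"
      using real[of "vec n (\<lambda>k. if k = i then 1 else if k = j then 1 else 0)"]
      unfolding qf_two[OF A i j False] by auto
    have 2: "Im (A$$(i,i) + \<i> * A$$(i,j) + cnj \<i> * A$$(j,i) + cnj \<i> * \<i> * A$$(j,j)) = 0"
      using real[of "vec n (\<lambda>k. if k = i then 1 else if k = j then \<i> else 0)"]
      unfolding qf_two[OF A i j False] by auto
    from 1 2 diag[OF i] diag[OF j] show ?thesis
      by (simp add: complex_eq_iff)
  qed
  show ?thesis unfolding hermitian_def
  proof (rule eq_matI)
    fix i j assume "i < dim_row A" "j < dim_col A"
    hence i: "i < n" and j: "j < n" using A by auto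
    show "adj A $$ (i,j) = A $$ (i,j)" using herm[OF i j] i j A by simp
  qed (use A in auto)
qed

lemma cinner_self_real: fixes w :: "complex vec"
  shows "w \<bullet>c w = complex_of_real (\<Sum>k<dim_vec w. (cmod (w$k))^2)"
proof -
  have "w \<bullet>c w = (\<Sum>k<dim_vec w. w$k * cnj (w$k))" by (simp add: scalar_prod_def lessThan_atLeast0)
  also have "\<dots> = (\<Sum>k<dim_vec w. complex_of_real ((cmod (w$k))^2))"
    by (rule sum.cong[OF refl]) (rule complex_norm_square[symmetric])
  also have "\<dots> = complex_of_real (\<Sum>k<dim_vec w. (cmod (w$k))^2)" by (rule of_real_sum[symmetric])
  finally show ?thesis .
qed

lemma unit_completion:
  fixes v :: "complex vec"
  assumes v: "v \<in> carrier_vec n" and v0: "v \<noteq> 0\<^sub>v n"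
  shows "\<exists>W c. unitary n W \<and> col W 0 = c \<cdot>\<^sub>v v"
proof -
  interpret cof_vec_space n "TYPE(complex)" .
  note bc = basis_completion[OF v v0]
  define b where "b = basis_completion v"
  define ws where "ws = gram_schmidt n b"
  note gs = gram_schmidt_result[OF bc(2) bc(4) bc(5) refl, folded b_def ws_def]
  have n0: "n > 0" using v0 v by (cases n, auto)
  obtain vs where bv: "b = v # vs" using bc(6,7) n0 unfolding b_def[symmetric] by (cases b, auto)
  have hd: "ws ! 0 = v" unfolding ws_def bv using v by (metis gram_schmidt_hd hd_conv_nth gs(4) bv ws_def length_0_conv list.distinct(1))
  have lws: "length ws = n" using gs(4) bc(6) unfolding ws_def b_def by simp
  have gs2: "corthogonal ws" using gs(2) unfolding ws_def .
  have gs3: "set ws \<subseteq> carrier_vec n" using gs(3) unfolding ws_def .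
  have wsc: "ws ! i \<in> carrier_vec n" if "i < n" for i using gs3 lws that nth_mem by blast
  define a where "a = (\<lambda>w :: complex vec. complex_of_real (1 / sqrt (Re (w \<bullet>c w))))"
  define W where "W = mat n n (\<lambda>(i,j). a (ws ! j) * (ws ! j) $ i)"
  have W: "W \<in> carrier_mat n n" unfolding W_def by auto
  have WW: "adj W * W = 1\<^sub>m n"
  proof (rule eq_matI)
    fix i j assume i: "i < dim_row (1\<^sub>m n)" and j: "j < dim_col (1\<^sub>m n)"
    hence i: "i < n" and j: "j < n" by auto
    have "(adj W * W) $$ (i,j) = (\<Sum>k<n. cnj (a (ws!i) * (ws!i)$k) * (a (ws!j) * (ws!j)$k))"
      using i j W by (simp add: scalar_prod_def W_def lessThan_atLeast0)
    also have "\<dots> = cnj (a (ws!i)) * a (ws!j) * ((ws!j) \<bullet>c (ws!i))"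
      using wsc[OF i] wsc[OF j]
      by (simp add: scalar_prod_def lessThan_atLeast0 sum_distrib_left mult_ac)
    also have "\<dots> = 1\<^sub>m n $$ (i,j)"
    proof (cases "i = j")
      case False
      thus ?thesis using corthogonalD[OF gs2, of j i] lws i j by auto
    next
      case True
      let ?w = "ws ! i"
      have nz: "?w \<bullet>c ?w \<noteq> 0" using corthogonalD[OF gs2, of i i] lws i by auto
      obtain r where r: "?w \<bullet>c ?w = complex_of_real r" using cinner_self_real by blast
      have rpos: "r > 0"
      proof -
        have "r = (\<Sum>k<dim_vec ?w. (cmod (?w$k))^2)" using r cinner_self_real[of ?w] by (metis of_real_eq_iff)
        hence "r \<ge> 0" by (simp add: sum_nonneg)
        thus ?thesis using nz r by (cases "r = 0", auto)
      qed
      have ar: "a ?w = complex_of_real (1 / sqrt r)" unfolding a_def r by simp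
      have "cnj (a ?w) * a ?w * (?w \<bullet>c ?w) = complex_of_real (1/sqrt r) * complex_of_real (1/sqrt r) * complex_of_real r"
        unfolding ar r by simp
      also have "\<dots> = complex_of_real (1/sqrt r * (1/sqrt r) * r)" by (simp only: of_real_mult)
      also have "1 / sqrt r * (1 / sqrt r) * r = 1"
      proof -
        have "sqrt r * sqrt r = r" using rpos by simp
        thus ?thesis using rpos by (simp add: field_simps)
      qed
      finally show ?thesis using True i by simp
    qed
    finally show "(adj W * W) $$ (i,j) = 1\<^sub>m n $$ (i,j)" .
  qed (use W in auto)
  have WW2: "W * adj W = 1\<^sub>m n"
    by (rule mat_mult_left_right_inverse[OF adj_carrier[OF W] W WW])
  have "col W 0 = a v \<cdot>\<^sub>v v" unfolding W_def using hd n0 v by (intro eq_vecI, auto)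
  thus ?thesis using W WW WW2 unfolding unitary_def by auto
qed

lemma unitaryD: assumes "unitary n U"
  shows "U \<in> carrier_mat n n" "adj U \<in> carrier_mat n n" "U * adj U = 1\<^sub>m n" "adj U * U = 1\<^sub>m n"
  using assms unfolding unitary_def by auto

lemma unitary_cancel: assumes U: "unitary n U" and X: "X \<in> carrier_mat n k"
  shows "U * (adj U * X) = X" "adj U * (U * X) = X"
proof -
  note u = unitaryD[OF U]
  have "U * (adj U * X) = (U * adj U) * X" using assoc_mult_mat[OF u(1) u(2) X] by simp
  thus "U * (adj U * X) = X" using u X by simp
  have "adj U * (U * X) = (adj U * U) * X" using assoc_mult_mat[OF u(2) u(1) X] by simp
  thus "adj U * (U * X) = X" using u X by simp
qed

lemma unitary_mult: assumes U: "unitary n U" and V: "unitary n V"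
  shows "unitary n (U * V)"
proof -
  note u = unitaryD[OF U] and v = unitaryD[OF V]
  have a: "adj (U * V) = adj V * adj U" using u v by (simp add: adj_mult)
  have "U * V * adj (U * V) = U * (V * (adj V * adj U))" unfolding a
    using assoc_mult_mat[OF u(1) v(1) mult_carrier_mat[OF v(2) u(2)]] by simp
  also have "\<dots> = 1\<^sub>m n" using unitary_cancel(1)[OF V u(2)] u by simp
  finally have 1: "U * V * adj (U * V) = 1\<^sub>m n" .
  have "adj (U * V) * (U * V) = adj V * (adj U * (U * V))" unfolding a
    using assoc_mult_mat[OF v(2) u(2) mult_carrier_mat[OF u(1) v(1)]] by simp
  also have "\<dots> = 1\<^sub>m n" using unitary_cancel(2)[OF U v(1)] v by simp
  finally have 2: "adj (U * V) * (U * V) = 1\<^sub>m n" .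
  show ?thesis unfolding unitary_def using 1 2 u v by auto
qed

lemma spectral:
  assumes "A \<in> carrier_mat n n" and "hermitian A"
  shows "\<exists>U d. unitary n U \<and> A = U * diag_real n d * adj U"
  using assms
proof (induction n arbitrary: A)
  case 0
  show ?case
    by (rule exI[of _ "1\<^sub>m 0"], rule exI[of _ "\<lambda>_. 0"])
      (use 0 in \<open>auto simp: unitary_def diag_real_def intro!: eq_matI\<close>)
next
  case (Suc m A)
  let ?n = "Suc m"
  have A: "A \<in> carrier_mat ?n ?n" and hA: "adj A = A" using Suc.prems unfolding hermitian_def by auto
  from spectrum_non_empty[OF A] obtain e where "e \<in> spectrum A" by auto
  hence ev: "eigenvalue A e" unfolding spectrum_def by auto
  define v0 where "v0 = find_eigenvector A e"
  have "eigenvector A v0 e" unfolding v0_def by (rule find_eigenvector[OF A ev])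
  hence v0: "v0 \<in> carrier_vec ?n" "v0 \<noteq> 0\<^sub>v ?n" "A *\<^sub>v v0 = e \<cdot>\<^sub>v v0"
    unfolding eigenvector_def using A by auto
  obtain W c where W: "unitary ?n W" and cW: "col W 0 = c \<cdot>\<^sub>v v0"
    using unit_completion[OF v0(1,2)] by auto
  note w = unitaryD[OF W]
  have Aw0: "A *\<^sub>v col W 0 = e \<cdot>\<^sub>v col W 0"
    unfolding cW using v0 A by (simp add: mult_mat_vec smult_smult_assoc mult.commute)
  define A' where "A' = adj W * A * W"
  have A': "A' \<in> carrier_mat ?n ?n" unfolding A'_def using w A by auto
  have hA': "adj A' = A'"
  proof -
    have "adj A' = adj W * adj (adj W * A)" unfolding A'_def
      by (rule adj_mult[OF mult_carrier_mat[OF w(2) A] w(1)])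
    also have "adj (adj W * A) = adj A * W" using adj_mult[OF w(2) A] by simp
    finally show ?thesis unfolding A'_def hA using assoc_mult_mat[OF w(2) A w(1)] by simp
  qed
  have col0: "A' $$ (i,0) = (if i = 0 then e else 0)" if i: "i < ?n" for i
  proof -
    have "A' $$ (i,0) = (adj W * (A * W)) $$ (i,0)" unfolding A'_def using assoc_mult_mat[OF w(2) A w(1)] by simp
    also have "\<dots> = row (adj W) i \<bullet> col (A * W) 0" using w A i by simp
    also have "col (A * W) 0 = e \<cdot>\<^sub>v col W 0" using w A Aw0 by simp
    also have "row (adj W) i \<bullet> (e \<cdot>\<^sub>v col W 0) = e * (row (adj W) i \<bullet> col W 0)"
      using w i by simp
    also have "row (adj W) i \<bullet> col W 0 = (adj W * W) $$ (i,0)"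
      by (subst index_mult_mat(1)) (use w i in auto)
    also have "\<dots> = (if i = 0 then 1 else 0)" using w i by simp
    finally show ?thesis by simp
  qed
  have e_real: "cnj e = e"
  proof -
    have "adj A' $$ (0,0) = cnj (A' $$ (0,0))" using A' by simp
    hence "A' $$ (0,0) = cnj (A' $$ (0,0))" by (simp only: hA')
    thus ?thesis using col0[of 0] by simp
  qed
  have row0: "A' $$ (0,j) = (if j = 0 then e else 0)" if j: "j < ?n" for j
  proof -
    have "A' $$ (0,j) = adj A' $$ (0,j)" by (simp only: hA')
    also have "\<dots> = cnj (A' $$ (j,0))" using A' j by simp
    finally show ?thesis using col0[OF j] e_real by simp
  qed
  have er: "e = complex_of_real (Re e)"
  proof -
    have "Im e = 0" using arg_cong[OF e_real, of Im] by simp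
    thus ?thesis by (simp add: complex_eq_iff)
  qed
  define A3 where "A3 = mat m m (\<lambda>(i,j). A' $$ (Suc i, Suc j))"
  have A3: "A3 \<in> carrier_mat m m" unfolding A3_def by auto
  have hA3: "hermitian A3" unfolding hermitian_def A3_def
  proof (rule eq_matI)
    fix i j assume "i < dim_row (mat m m (\<lambda>(i,j). A' $$ (Suc i, Suc j)))"
      "j < dim_col (mat m m (\<lambda>(i,j). A' $$ (Suc i, Suc j)))"
    hence i: "i < m" and j: "j < m" by auto
    have "cnj (A' $$ (Suc j, Suc i)) = adj A' $$ (Suc i, Suc j)" using A' i j by simp
    thus "adj (mat m m (\<lambda>(i,j). A' $$ (Suc i, Suc j))) $$ (i,j) = mat m m (\<lambda>(i,j). A' $$ (Suc i, Suc j)) $$ (i,j)"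
      using i j hA' by simp
  qed auto
  from Suc.IH[OF A3 hA3] obtain U3 d3 where U3: "unitary m U3" and A3e: "A3 = U3 * diag_real m d3 * adj U3"
    by auto
  note u3 = unitaryD[OF U3]
  define B where "B = four_block_mat (1\<^sub>m 1) (0\<^sub>m 1 m) (0\<^sub>m m 1) U3"
  define E where "E = (mat 1 1 (\<lambda>_. e) :: complex mat)"
  define d where "d = (\<lambda>i. if i = 0 then Re e else d3 (i - 1))"
  have B: "B \<in> carrier_mat ?n ?n" unfolding B_def using u3 by auto
  have adjB: "adj B = four_block_mat (1\<^sub>m 1) (0\<^sub>m 1 m) (0\<^sub>m m 1) (adj U3)"
    unfolding B_def using u3 by (intro eq_matI) auto
  have Dd: "diag_real ?n d = four_block_mat E (0\<^sub>m 1 m) (0\<^sub>m m 1) (diag_real m d3)"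
    unfolding E_def d_def diag_real_def using er[symmetric] by (intro eq_matI) auto
  have A'b: "A' = four_block_mat E (0\<^sub>m 1 m) (0\<^sub>m m 1) A3"
    unfolding E_def A3_def using A' col0 row0 by (intro eq_matI) auto
  have E: "E \<in> carrier_mat 1 1" unfolding E_def by auto
  have dg3: "diag_real m d3 \<in> carrier_mat m m" unfolding diag_real_def by auto
  have z1: "(0\<^sub>m 1 m :: complex mat) \<in> carrier_mat 1 m" and z2: "(0\<^sub>m m 1 :: complex mat) \<in> carrier_mat m 1"
    and o1: "(1\<^sub>m 1 :: complex mat) \<in> carrier_mat 1 1" by auto
  have m1: "diag_real ?n d * adj B = four_block_mat E (0\<^sub>m 1 m) (0\<^sub>m m 1) (diag_real m d3 * adj U3)"
    unfolding Dd adjB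
    by (subst mult_four_block_mat[OF E z1 z2 dg3 o1 z1 z2 u3(2)]) (use E dg3 u3 in simp)
  have m2: "B * four_block_mat E (0\<^sub>m 1 m) (0\<^sub>m m 1) (diag_real m d3 * adj U3)
       = four_block_mat E (0\<^sub>m 1 m) (0\<^sub>m m 1) (U3 * (diag_real m d3 * adj U3))"
    unfolding B_def
    by (subst mult_four_block_mat[OF o1 z1 z2 u3(1) E z1 z2 mult_carrier_mat[OF dg3 u3(2)]]) (use E dg3 u3 in simp)
  have "B * diag_real ?n d * adj B = B * (diag_real ?n d * adj B)"
    by (rule assoc_mult_mat[OF B _ adj_carrier[OF B]]) (simp add: diag_real_def)
  also have "\<dots> = A'" unfolding m1 m2 A'b A3e using assoc_mult_mat[OF u3(1) dg3 u3(2)] by simp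
  finally have "B * diag_real ?n d * adj B = A'" .
  hence BDB: "B * diag_real ?n d * adj B = A'" .
  have Bu: "unitary ?n B"
  proof -
    have 1: "B * adj B = 1\<^sub>m ?n" unfolding adjB unfolding B_def
      by (subst mult_four_block_mat[OF o1 z1 z2 u3(1) o1 z1 z2 u3(2)]) (use u3 in simp)
    have 2: "adj B * B = 1\<^sub>m ?n" unfolding adjB unfolding B_def
      by (subst mult_four_block_mat[OF o1 z1 z2 u3(2) o1 z1 z2 u3(1)]) (use u3 in simp)
    show ?thesis unfolding unitary_def using 1 2 B by auto
  qed
  have AWA: "A = W * A' * adj W"
  proof -
    have awa: "adj W * A \<in> carrier_mat ?n ?n" by (rule mult_carrier_mat[OF w(2) A])
    have "A' * adj W = (adj W * A) * (W * adj W)" unfolding A'_def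
      by (rule assoc_mult_mat[OF awa w(1) w(2)])
    hence "A' * adj W = adj W * A" using w right_mult_one_mat[OF awa] by simp
    hence "W * A' * adj W = W * (adj W * A)" using assoc_mult_mat[OF w(1) A' w(2)] by simp
    also have "\<dots> = A" by (rule unitary_cancel(1)[OF W A])
    finally show ?thesis by simp
  qed
  have dg: "diag_real ?n d \<in> carrier_mat ?n ?n" unfolding diag_real_def by auto
  have "A = (W * B) * diag_real ?n d * adj (W * B)"
  proof -
    have BD: "B * diag_real ?n d \<in> carrier_mat ?n ?n" using B dg by simp
    have aB: "adj B \<in> carrier_mat ?n ?n" using B by simp
    have "(W * B) * diag_real ?n d * adj (W * B) = W * (B * diag_real ?n d) * (adj B * adj W)"
      using adj_mult[OF w(1) B] assoc_mult_mat[OF w(1) B dg] by simp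
    also have "\<dots> = W * ((B * diag_real ?n d) * (adj B * adj W))"
      by (rule assoc_mult_mat[OF w(1) BD mult_carrier_mat[OF aB w(2)]])
    also have "(B * diag_real ?n d) * (adj B * adj W) = (B * diag_real ?n d * adj B) * adj W"
      by (rule assoc_mult_mat[OF BD aB w(2), symmetric])
    also have "W * (B * diag_real ?n d * adj B * adj W) = W * (B * diag_real ?n d * adj B) * adj W"
      by (rule assoc_mult_mat[OF w(1) mult_carrier_mat[OF BD aB] w(2), symmetric])
    finally show ?thesis unfolding BDB using AWA by simp
  qed
  thus ?case using unitary_mult[OF W Bu] by blast
qed

lemma sum_mult_split: fixes h :: "nat \<Rightarrow> 'a :: comm_monoid_add"
  shows "(\<Sum>k<a*b. h k) = (\<Sum>q<a. \<Sum>r<b. h (q*b + r))"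
proof (induction a)
  case 0 show ?case by simp
next
  case (Suc a)
  have "(\<Sum>k<Suc a * b. h k) = (\<Sum>k\<in>{0..<a*b + b}. h k)" by (simp add: lessThan_atLeast0 add.commute)
  also have "\<dots> = (\<Sum>k\<in>{0..<a*b}. h k) + (\<Sum>k\<in>{a*b..<a*b + b}. h k)"
    by (rule sum.atLeastLessThan_concat[symmetric]) auto
  also have "(\<Sum>k\<in>{a*b..<a*b + b}. h k) = (\<Sum>r\<in>{0..<b}. h (a*b + r))"
    using sum.shift_bounds_nat_ivl[of h 0 "a*b" b] by (simp add: add.commute)
  finally show ?case using Suc by (simp add: lessThan_atLeast0 mult.commute)
qed

lemma kron_dims[simp]: "dim_row (kron A B) = dim_row A * dim_row B" "dim_col (kron A B) = dim_col A * dim_col B"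
  unfolding kron_def by auto

lemma kron_carrier[simp]: "B \<in> carrier_mat b b \<Longrightarrow> kron (1\<^sub>m a) B \<in> carrier_mat (a*b) (a*b)"
  unfolding carrier_mat_def by auto

lemma kron_index: assumes i: "i < a*b" and j: "j < a*b" and B: "B \<in> carrier_mat b b"
  shows "kron (1\<^sub>m a) B $$ (i,j) = (if i div b = j div b then B $$ (i mod b, j mod b) else 0)"
proof -
  have b: "b > 0" using i by (cases b, auto)
  have ia: "i div b < a" "j div b < a" using i j b by (auto simp: div_less_iff_less_mult mult.commute)
  have dr: "dim_row B = b" "dim_col B = b" using B by auto
  have "kron (1\<^sub>m a) B $$ (i,j) = (1\<^sub>m a) $$ (i div b, j div b) * B $$ (i mod b, j mod b)"
    unfolding kron_def dr using i j by simp
  also have "\<dots> = (if i div b = j div b then B $$ (i mod b, j mod b) else 0)"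
    using ia by simp
  finally show ?thesis .
qed

lemma kron_mult: assumes P: "P \<in> carrier_mat b b" and Q: "Q \<in> carrier_mat b b"
  shows "kron (1\<^sub>m a) P * kron (1\<^sub>m a) Q = kron (1\<^sub>m a) (P * Q)"
proof (rule eq_matI)
  fix i j assume "i < dim_row (kron (1\<^sub>m a) (P * Q))" "j < dim_col (kron (1\<^sub>m a) (P * Q))"
  hence i: "i < a*b" and j: "j < a*b" using P Q by auto
  have b: "b > 0" using i by (cases b, auto)
  have ia: "i div b < a" "j div b < a" using i j b by (auto simp: div_less_iff_less_mult mult.commute)
  have im: "i mod b < b" "j mod b < b" using b by auto
  have qr: "(q*b + r) div b = q" "(q*b + r) mod b = r" if "r < b" for q r using that b by auto
  have "(kron (1\<^sub>m a) P * kron (1\<^sub>m a) Q) $$ (i,j) =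
      (\<Sum>k<a*b. kron (1\<^sub>m a) P $$ (i,k) * kron (1\<^sub>m a) Q $$ (k,j))"
    using i j P Q by (simp add: scalar_prod_def lessThan_atLeast0)
  also have "\<dots> = (\<Sum>q<a. \<Sum>r<b. kron (1\<^sub>m a) P $$ (i,q*b+r) * kron (1\<^sub>m a) Q $$ (q*b+r,j))"
    by (rule sum_mult_split)
  also have "\<dots> = (\<Sum>q<a. \<Sum>r<b. (if i div b = q then P $$ (i mod b, r) else 0) *
       (if q = j div b then Q $$ (r, j mod b) else 0))"
  proof (rule sum.cong[OF refl], rule sum.cong[OF refl])
    fix q r assume "q \<in> {..<a}" "r \<in> {..<b}"
    hence q: "q < a" and r: "r < b" by auto
    have "q * b + r < Suc q * b" using r by simp
    also have "Suc q * b \<le> a * b" using q by (intro mult_le_mono1) simp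
    finally have k: "q*b + r < a*b" .
    show "kron (1\<^sub>m a) P $$ (i,q*b+r) * kron (1\<^sub>m a) Q $$ (q*b+r,j) =
       (if i div b = q then P $$ (i mod b, r) else 0) * (if q = j div b then Q $$ (r, j mod b) else 0)"
      using kron_index[OF i k P] kron_index[OF k j Q] qr[OF r] by simp
  qed
  also have "\<dots> = (\<Sum>q<a. if i div b = q then (\<Sum>r<b. P $$ (i mod b, r) * (if q = j div b then Q $$ (r, j mod b) else 0)) else 0)"
    by (rule sum.cong[OF refl]) auto
  also have "\<dots> = (\<Sum>r<b. P $$ (i mod b, r) * (if i div b = j div b then Q $$ (r, j mod b) else 0))"
    using ia by simp
  also have "\<dots> = (if i div b = j div b then (P * Q) $$ (i mod b, j mod b) else 0)"
    using P Q im by (simp add: scalar_prod_def lessThan_atLeast0)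
  also have "\<dots> = kron (1\<^sub>m a) (P * Q) $$ (i,j)"
    using kron_index[OF i j mult_carrier_mat[OF P Q]] by simp
  finally show "(kron (1\<^sub>m a) P * kron (1\<^sub>m a) Q) $$ (i,j) = kron (1\<^sub>m a) (P * Q) $$ (i,j)" .
qed (use P Q in auto)

lemma kron_adj: assumes P: "P \<in> carrier_mat b b"
  shows "adj (kron (1\<^sub>m a) P) = kron (1\<^sub>m a) (adj P)"
proof (rule eq_matI)
  fix i j assume "i < dim_row (kron (1\<^sub>m a) (adj P))" "j < dim_col (kron (1\<^sub>m a) (adj P))"
  hence i: "i < a*b" and j: "j < a*b" using P by auto
  have b: "b > 0" using i by (cases b, auto)
  show "adj (kron (1\<^sub>m a) P) $$ (i,j) = kron (1\<^sub>m a) (adj P) $$ (i,j)"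
    using kron_index[OF j i P] kron_index[OF i j adj_carrier[OF P]] i j P b by auto
qed (use P in auto)

lemma div_mod_eq_iff: assumes "b > (0::nat)"
  shows "i = j \<longleftrightarrow> i div b = j div b \<and> i mod b = j mod b"
proof
  assume h: "i div b = j div b \<and> i mod b = j mod b"
  have "i = i div b * b + i mod b" by simp
  also have "\<dots> = j div b * b + j mod b" using h by simp
  also have "\<dots> = j" by simp
  finally show "i = j" .
qed simp

lemma kron_diag: "kron (1\<^sub>m a) (diag_real b d) = diag_real (a*b) (\<lambda>i. d (i mod b))"
proof (rule eq_matI)
  have D: "diag_real b d \<in> carrier_mat b b" unfolding diag_real_def by auto
  fix i j assume "i < dim_row (diag_real (a*b) (\<lambda>i. d (i mod b)))" "j < dim_col (diag_real (a*b) (\<lambda>i. d (i mod b)))"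
  hence i: "i < a*b" and j: "j < a*b" unfolding diag_real_def by auto
  have b: "b > 0" using i by (cases b, auto)
  have im: "i mod b < b" "j mod b < b" using b by auto
  have rhs: "diag_real (a*b) (\<lambda>i. d (i mod b)) $$ (i,j) = (if i = j then complex_of_real (d (i mod b)) else 0)"
    unfolding diag_real_def using i j by simp
  have dd: "diag_real b d $$ (i mod b, j mod b) = (if i mod b = j mod b then complex_of_real (d (i mod b)) else 0)"
    unfolding diag_real_def using im by simp
  have lhs: "kron (1\<^sub>m a) (diag_real b d) $$ (i,j) = (if i div b = j div b \<and> i mod b = j mod b then complex_of_real (d (i mod b)) else 0)"
    unfolding kron_index[OF i j D] dd by simp
  show "kron (1\<^sub>m a) (diag_real b d) $$ (i,j) = diag_real (a*b) (\<lambda>i. d (i mod b)) $$ (i,j)"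
    unfolding lhs rhs div_mod_eq_iff[OF b, of i j] ..
qed (auto simp: diag_real_def)

lemma one_diag: "1\<^sub>m n = diag_real n (\<lambda>_. 1)"
  unfolding diag_real_def by (rule eq_matI) auto

lemma kron_one: "kron (1\<^sub>m a) (1\<^sub>m b) = 1\<^sub>m (a*b)"
  unfolding one_diag[of b] kron_diag one_diag[of "a*b"] ..

lemma qf_spec: assumes W: "unitary n W" and v: "v \<in> carrier_vec n"
  shows "map_vec cnj v \<bullet> ((W * diag_real n h * adj W) *\<^sub>v v)
       = complex_of_real (\<Sum>k<n. h k * (cmod ((adj W *\<^sub>v v)$k))^2)"
proof -
  note w = unitaryD[OF W]
  have D: "diag_real n h \<in> carrier_mat n n" unfolding diag_real_def by auto
  define u where "u = adj W *\<^sub>v v"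
  have u: "u \<in> carrier_vec n" unfolding u_def using mult_mat_vec_carrier[OF w(2) v] .
  have "(W * diag_real n h * adj W) *\<^sub>v v = (W * diag_real n h) *\<^sub>v u"
    unfolding u_def by (rule assoc_mult_mat_vec[OF mult_carrier_mat[OF w(1) D] w(2) v])
  also have "\<dots> = W *\<^sub>v (diag_real n h *\<^sub>v u)"
    by (rule assoc_mult_mat_vec[OF w(1) D u])
  finally have 1: "(W * diag_real n h * adj W) *\<^sub>v v = W *\<^sub>v (diag_real n h *\<^sub>v u)" .
  have "map_vec cnj v \<bullet> (W *\<^sub>v (diag_real n h *\<^sub>v u)) = map_vec cnj (adj W *\<^sub>v v) \<bullet> (diag_real n h *\<^sub>v u)"
    by (rule inner_adj[OF w(1) v mult_mat_vec_carrier[OF D u]])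
  also have "\<dots> = map_vec cnj u \<bullet> (diag_real n h *\<^sub>v u)" unfolding u_def ..
  also have "\<dots> = (\<Sum>k<n. cnj (u$k) * (complex_of_real (h k) * u$k))"
    unfolding diag_mult_vec[OF u] using u by (simp add: scalar_prod_def lessThan_atLeast0)
  also have "\<dots> = (\<Sum>k<n. complex_of_real (h k * (cmod (u$k))^2))"
  proof (rule sum.cong[OF refl])
    fix k
    have "cnj (u$k) * (complex_of_real (h k) * u$k) = complex_of_real (h k) * (u$k * cnj (u$k))"
      by (simp add: mult_ac)
    also have "\<dots> = complex_of_real (h k) * complex_of_real ((cmod (u$k))^2)"
      by (simp only: complex_norm_square)
    finally show "cnj (u$k) * (complex_of_real (h k) * u$k) = complex_of_real (h k * (cmod (u$k))^2)"
      by simp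
  qed
  also have "\<dots> = complex_of_real (\<Sum>k<n. h k * (cmod (u$k))^2)" by simp
  finally show ?thesis unfolding 1 u_def .
qed

lemma adj_col_unit: assumes W: "unitary n W" and i: "i < n"
  shows "adj W *\<^sub>v col W i = unit_vec n i"
proof -
  note w = unitaryD[OF W]
  have "adj W *\<^sub>v col W i = col (adj W * W) i" using col_mult2[OF w(2) w(1) i] by simp
  also have "\<dots> = unit_vec n i" using w i by simp
  finally show ?thesis .
qed

lemma adj_mult_vec_index: assumes V: "V \<in> carrier_mat n n" and w: "w \<in> carrier_vec n" and i: "i < n"
  shows "(adj V *\<^sub>v w) $ i = map_vec cnj (col V i) \<bullet> w"
  using V w i by (simp add: scalar_prod_def)

lemma sum_unit_sq: assumes i: "i < n"
  shows "(\<Sum>k<n. h k * (cmod (unit_vec n i $ k))^2) = h i"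
proof -
  have "(\<Sum>k<n. h k * (cmod (unit_vec n i $ k))^2) = (\<Sum>k<n. if k = i then h i else 0)"
    by (rule sum.cong[OF refl]) (auto simp: unit_vec_def)
  also have "\<dots> = h i" using i by simp
  finally show ?thesis .
qed

lemma qf_col: assumes W: "unitary n W" and i: "i < n"
  shows "map_vec cnj (col W i) \<bullet> ((W * diag_real n h * adj W) *\<^sub>v col W i) = complex_of_real (h i)"
proof -
  have "map_vec cnj (col W i) \<bullet> ((W * diag_real n h * adj W) *\<^sub>v col W i)
     = complex_of_real (\<Sum>k<n. h k * (cmod ((adj W *\<^sub>v col W i)$k))^2)"
    by (rule qf_spec[OF W col_carrier_vec[OF i unitaryD(1)[OF W]]])
  also have "\<dots> = complex_of_real (h i)" unfolding adj_col_unit[OF W i] sum_unit_sq[OF i] ..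
  finally show ?thesis .
qed

lemma trace_diag_mult: assumes G: "G \<in> carrier_mat n n"
  shows "trace (diag_real n e * G) = (\<Sum>i<n. complex_of_real (e i) * G $$ (i,i))"
proof -
  have "trace (diag_real n e * G) = (\<Sum>i<n. (diag_real n e * G) $$ (i,i))" unfolding trace_def
    using G by (simp add: diag_real_def)
  also have "\<dots> = (\<Sum>i<n. complex_of_real (e i) * G $$ (i,i))"
  proof (rule sum.cong[OF refl])
    fix i assume "i \<in> {..<n}" hence i: "i < n" by simp
    have "(diag_real n e * G) $$ (i,i) = (diag_real n e *\<^sub>v col G i) $ i"
      using G i by (simp add: diag_real_def)
    also have "\<dots> = complex_of_real (e i) * G $$ (i,i)"
      unfolding diag_mult_vec[OF col_carrier_vec[OF i G]] using G i by simp
    finally show "(diag_real n e * G) $$ (i,i) = complex_of_real (e i) * G $$ (i,i)" .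
  qed
  finally show ?thesis .
qed

lemma diag_adj_col: assumes V: "V \<in> carrier_mat n n" and Z: "Z \<in> carrier_mat n n" and i: "i < n"
  shows "(adj V * Z * V) $$ (i,i) = map_vec cnj (col V i) \<bullet> (Z *\<^sub>v col V i)"
proof -
  have "(adj V * Z * V) $$ (i,i) = (adj V * (Z * V)) $$ (i,i)" using assoc_mult_mat[OF adj_carrier[OF V] Z V] by simp
  also have "\<dots> = (adj V *\<^sub>v col (Z * V) i) $ i" using V Z i by simp
  also have "col (Z * V) i = Z *\<^sub>v col V i" using V Z i by simp
  also have "(adj V *\<^sub>v (Z *\<^sub>v col V i)) $ i = map_vec cnj (col V i) \<bullet> (Z *\<^sub>v col V i)"
    by (rule adj_mult_vec_index[OF V mult_mat_vec_carrier[OF Z col_carrier_vec[OF i V]] i])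
  finally show ?thesis .
qed

lemma qf_lin: assumes A: "A \<in> carrier_mat n n" and B: "B \<in> carrier_mat n n" and w: "w \<in> carrier_vec n"
  shows "map_vec cnj w \<bullet> ((complex_of_real c \<cdot>\<^sub>m A - B) *\<^sub>v w)
    = complex_of_real c * (map_vec cnj w \<bullet> (A *\<^sub>v w)) - map_vec cnj w \<bullet> (B *\<^sub>v w)"
proof -
  have C: "complex_of_real c \<cdot>\<^sub>m A - B \<in> carrier_mat n n" using minus_carrier_mat[OF B] by simp
  show ?thesis unfolding qf_sum[OF C w] qf_sum[OF A w] qf_sum[OF B w]
    using A B by (simp add: algebra_simps sum_subtractf sum_distrib_left)
qed

lemma diag_carrier[simp]: "diag_real n h \<in> carrier_mat n n"
  unfolding diag_real_def by auto

lemma spec_carrier: assumes W: "W \<in> carrier_mat n n"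
  shows "W * diag_real n h * adj W \<in> carrier_mat n n"
  using mult_carrier_mat[OF mult_carrier_mat[OF W diag_carrier] adj_carrier[OF W]] .

lemma spec_mult_vec: assumes W: "unitary n W" and v: "v \<in> carrier_vec n"
  shows "(W * diag_real n h * adj W) *\<^sub>v v = W *\<^sub>v (diag_real n h *\<^sub>v (adj W *\<^sub>v v))"
proof -
  note w = unitaryD[OF W]
  have "(W * diag_real n h * adj W) *\<^sub>v v = (W * diag_real n h) *\<^sub>v (adj W *\<^sub>v v)"
    by (rule assoc_mult_mat_vec[OF mult_carrier_mat[OF w(1) diag_carrier] w(2) v])
  also have "\<dots> = W *\<^sub>v (diag_real n h *\<^sub>v (adj W *\<^sub>v v))"
    by (rule assoc_mult_mat_vec[OF w(1) diag_carrier mult_mat_vec_carrier[OF w(2) v]])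
  finally show ?thesis .
qed

lemma adj_W_W_vec: assumes W: "unitary n W" and x: "x \<in> carrier_vec n"
  shows "adj W *\<^sub>v (W *\<^sub>v x) = x"
proof -
  note w = unitaryD[OF W]
  have "adj W *\<^sub>v (W *\<^sub>v x) = (adj W * W) *\<^sub>v x"
    by (rule assoc_mult_mat_vec[OF w(2) w(1) x, symmetric])
  thus ?thesis using w x by simp
qed

lemma adj_spec: assumes W: "W \<in> carrier_mat n n"
  shows "adj (W * diag_real n h * adj W) = W * diag_real n h * adj W"
proof -
  have "adj (W * diag_real n h * adj W) = adj (adj W) * adj (W * diag_real n h)"
    by (rule adj_mult[OF mult_carrier_mat[OF W diag_carrier] adj_carrier[OF W]])
  also have "adj (W * diag_real n h) = diag_real n h * adj W"
    using adj_mult[OF W diag_carrier] by simp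
  finally show ?thesis
    using assoc_mult_mat[OF W diag_carrier adj_carrier[OF W]] by simp
qed

lemma spec_one: assumes W: "unitary n W"
  shows "W * diag_real n (\<lambda>_. 1) * adj W = 1\<^sub>m n"
  using unitaryD[OF W] unfolding one_diag[symmetric] by simp

lemma kron_unitary: assumes U: "unitary b U" shows "unitary (a*b) (kron (1\<^sub>m a) U)"
proof -
  note u = unitaryD[OF U]
  have 1: "kron (1\<^sub>m a) U * adj (kron (1\<^sub>m a) U) = 1\<^sub>m (a*b)"
    unfolding kron_adj[OF u(1)] kron_mult[OF u(1) u(2)] u(3) kron_one ..
  have 2: "adj (kron (1\<^sub>m a) U) * kron (1\<^sub>m a) U = 1\<^sub>m (a*b)"
    unfolding kron_adj[OF u(1)] kron_mult[OF u(2) u(1)] u(4) kron_one ..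
  show ?thesis unfolding unitary_def using 1 2 kron_carrier[OF u(1)] by auto
qed

lemma kron_spec: assumes U: "unitary b U"
  shows "kron (1\<^sub>m a) (U * diag_real b h * adj U)
     = kron (1\<^sub>m a) U * diag_real (a*b) (\<lambda>i. h (i mod b)) * adj (kron (1\<^sub>m a) U)"
proof -
  note u = unitaryD[OF U]
  have "kron (1\<^sub>m a) (U * diag_real b h * adj U) = kron (1\<^sub>m a) (U * diag_real b h) * kron (1\<^sub>m a) (adj U)"
    by (rule kron_mult[OF mult_carrier_mat[OF u(1) diag_carrier] u(2), symmetric])
  also have "kron (1\<^sub>m a) (U * diag_real b h) = kron (1\<^sub>m a) U * kron (1\<^sub>m a) (diag_real b h)"
    by (rule kron_mult[OF u(1) diag_carrier, symmetric])
  finally show ?thesis unfolding kron_diag kron_adj[OF u(1)] .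
qed

lemma trace_spec: assumes V: "unitary n V"
  shows "trace (V * diag_real n e * adj V) = (\<Sum>i<n. complex_of_real (e i))"
proof -
  note v = unitaryD[OF V]
  have "trace (V * diag_real n e * adj V) = trace (V * (diag_real n e * adj V))"
    using assoc_mult_mat[OF v(1) diag_carrier v(2)] by simp
  also have "\<dots> = trace ((diag_real n e * adj V) * V)"
    by (rule trace_comm[OF v(1) mult_carrier_mat[OF diag_carrier v(2)]])
  also have "(diag_real n e * adj V) * V = diag_real n e * 1\<^sub>m n"
    using assoc_mult_mat[OF diag_carrier v(2) v(1)] v(4) by simp
  also have "trace (diag_real n e * 1\<^sub>m n) = (\<Sum>i<n. complex_of_real (e i))"
    using trace_diag_mult[OF one_carrier_mat, of n e] by simp
  finally show ?thesis .
qed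

lemma gamma_expand:
  assumes V: "unitary n V" and rho: "\<rho> = V * diag_real n e * adj V"
    and Y: "Y \<in> carrier_mat n n" and hY: "adj Y = Y"
  shows "trace ((\<rho> * Y) * (\<rho> * Y)) =
    (\<Sum>i<n. complex_of_real (e i) * (map_vec cnj (Y *\<^sub>v col V i) \<bullet> (\<rho> *\<^sub>v (Y *\<^sub>v col V i))))"
proof -
  note v = unitaryD[OF V]
  have R: "\<rho> \<in> carrier_mat n n" unfolding rho using spec_carrier[OF v(1)] .
  define Z where "Z = Y * (\<rho> * Y)"
  have RY: "\<rho> * Y \<in> carrier_mat n n" using mult_carrier_mat[OF R Y] .
  have Z: "Z \<in> carrier_mat n n" unfolding Z_def using mult_carrier_mat[OF Y RY] .
  have "(\<rho> * Y) * (\<rho> * Y) = \<rho> * Z" unfolding Z_def by (rule assoc_mult_mat[OF R Y RY])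
  also have "\<rho> * Z = (V * diag_real n e) * (adj V * Z)" unfolding rho
    by (rule assoc_mult_mat[OF mult_carrier_mat[OF v(1) diag_carrier] v(2) Z])
  also have "\<dots> = V * (diag_real n e * (adj V * Z))"
    by (rule assoc_mult_mat[OF v(1) diag_carrier mult_carrier_mat[OF v(2) Z]])
  finally have 1: "trace ((\<rho> * Y) * (\<rho> * Y)) = trace (V * (diag_real n e * (adj V * Z)))" by simp
  have G: "adj V * Z * V \<in> carrier_mat n n" using mult_carrier_mat[OF mult_carrier_mat[OF v(2) Z] v(1)] .
  have "trace (V * (diag_real n e * (adj V * Z))) = trace ((diag_real n e * (adj V * Z)) * V)"
    by (rule trace_comm[OF v(1) mult_carrier_mat[OF diag_carrier mult_carrier_mat[OF v(2) Z]]])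
  also have "(diag_real n e * (adj V * Z)) * V = diag_real n e * (adj V * Z * V)"
    by (rule assoc_mult_mat[OF diag_carrier mult_carrier_mat[OF v(2) Z] v(1)])
  also have "trace (diag_real n e * (adj V * Z * V)) = (\<Sum>i<n. complex_of_real (e i) * (adj V * Z * V) $$ (i,i))"
    by (rule trace_diag_mult[OF G])
  also have "\<dots> = (\<Sum>i<n. complex_of_real (e i) * (map_vec cnj (Y *\<^sub>v col V i) \<bullet> (\<rho> *\<^sub>v (Y *\<^sub>v col V i))))"
  proof (rule sum.cong[OF refl])
    fix i assume "i \<in> {..<n}" hence i: "i < n" by simp
    have c: "col V i \<in> carrier_vec n" using col_carrier_vec[OF i v(1)] .
    have yc: "Y *\<^sub>v col V i \<in> carrier_vec n" using mult_mat_vec_carrier[OF Y c] .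
    have "(adj V * Z * V) $$ (i,i) = map_vec cnj (col V i) \<bullet> (Z *\<^sub>v col V i)"
      by (rule diag_adj_col[OF v(1) Z i])
    also have "Z *\<^sub>v col V i = Y *\<^sub>v (\<rho> *\<^sub>v (Y *\<^sub>v col V i))"
      unfolding Z_def using assoc_mult_mat_vec[OF Y RY c] assoc_mult_mat_vec[OF R Y c] by simp
    also have "map_vec cnj (col V i) \<bullet> (Y *\<^sub>v (\<rho> *\<^sub>v (Y *\<^sub>v col V i)))
        = map_vec cnj (adj Y *\<^sub>v col V i) \<bullet> (\<rho> *\<^sub>v (Y *\<^sub>v col V i))"
      by (rule inner_adj[OF Y c mult_mat_vec_carrier[OF R yc]])
    finally show "complex_of_real (e i) * (adj V * Z * V) $$ (i,i) =
       complex_of_real (e i) * (map_vec cnj (Y *\<^sub>v col V i) \<bullet> (\<rho> *\<^sub>v (Y *\<^sub>v col V i)))"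
      unfolding hY by simp
  qed
  finally show ?thesis using 1 by simp
qed

lemma psdD: assumes "psd n A" "v \<in> carrier_vec n"
  shows "Re (map_vec cnj v \<bullet> (A *\<^sub>v v)) \<ge> 0" "Im (map_vec cnj v \<bullet> (A *\<^sub>v v)) = 0"
  using assms unfolding psd_def Let_def by auto

lemma dft_le: fixes x :: real shows "x * (if x > 0 then 1 / sqrt x else 0)^2 \<le> 1"
proof (cases "x > 0")
  case True
  hence "(1 / sqrt x)^2 = 1 / x" by (simp add: power_divide)
  thus ?thesis using True by simp
qed simp

theorem lemma15:
  fixes dA dB :: nat and \<rho> \<sigma> :: "complex mat"
  assumes "psd (dA * dB) \<rho>"
    and "0 < Re (trace \<rho>)" and "Re (trace \<rho>) \<le> 1"
    and "psd dB \<sigma>" and "trace \<sigma> = 1"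
  shows "D_max (dA * dB) \<rho> (kron (1\<^sub>m dA) \<sigma>)
           \<ge> ereal (log 2 (Re (Gamma_C dA \<rho> \<sigma>)) - log 2 (Re (trace \<rho>)))"
proof -
  define n where "n = dA * dB"
  have psdr: "psd n \<rho>" using assms(1) unfolding n_def .
  note trpos = assms(2) and psds = assms(4)
  have rho: "\<rho> \<in> carrier_mat n n" using psdr unfolding psd_def by auto
  obtain V e where V: "unitary n V" and re: "\<rho> = V * diag_real n e * adj V"
    using spectral[OF rho psd_hermitian[OF psdr]] by auto
  note v = unitaryD[OF V]
  have sig: "\<sigma> \<in> carrier_mat dB dB" using psds unfolding psd_def by auto
  have drs: "dim_row \<sigma> = dB" using sig by auto
  have ex: "\<exists>X. \<exists>U d. unitary (dim_row \<sigma>) U \<and> \<sigma> = U * diag_real (dim_row \<sigma>) d * adj U \<and>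
       X = U * diag_real (dim_row \<sigma>) (\<lambda>i. if d i > 0 then 1 / sqrt (d i) else 0) * adj U"
    using spectral[OF sig psd_hermitian[OF psds]] unfolding drs by blast
  have "\<exists>U d. unitary (dim_row \<sigma>) U \<and> \<sigma> = U * diag_real (dim_row \<sigma>) d * adj U \<and>
       inv_sqrt \<sigma> = U * diag_real (dim_row \<sigma>) (\<lambda>i. if d i > 0 then 1 / sqrt (d i) else 0) * adj U"
    unfolding inv_sqrt_def by (rule someI_ex[OF ex])
  then obtain U d where U: "unitary dB U" and sd: "\<sigma> = U * diag_real dB d * adj U"
    and Xd: "inv_sqrt \<sigma> = U * diag_real dB (\<lambda>i. if d i > 0 then 1 / sqrt (d i) else 0) * adj U"
    unfolding drs by blast
  note u = unitaryD[OF U]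
  have dnn: "0 \<le> d k" if k: "k < dB" for k
  proof -
    have "Re (map_vec cnj (col U k) \<bullet> (\<sigma> *\<^sub>v col U k)) \<ge> 0"
      by (rule psdD(1)[OF psds col_carrier_vec[OF k u(1)]])
    thus ?thesis unfolding sd qf_col[OF U k] by simp
  qed
  define W where "W = kron (1\<^sub>m dA) U"
  define dt where "dt = (\<lambda>i. d (i mod dB))"
  define ft where "ft = (\<lambda>i. if d (i mod dB) > 0 then 1 / sqrt (d (i mod dB)) else 0)"
  have W: "unitary n W" unfolding W_def n_def by (rule kron_unitary[OF U])
  note w = unitaryD[OF W]
  define \<tau> where "\<tau> = kron (1\<^sub>m dA) \<sigma>"
  define Y where "Y = kron (1\<^sub>m dA) (inv_sqrt \<sigma>)"
  have tau: "\<tau> = W * diag_real n dt * adj W"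
    unfolding \<tau>_def sd kron_spec[OF U] W_def n_def dt_def ..
  have Ye: "Y = W * diag_real n ft * adj W"
    unfolding Y_def Xd kron_spec[OF U] W_def n_def ft_def ..
  have Yc: "Y \<in> carrier_mat n n" unfolding Ye by (rule spec_carrier[OF w(1)])
  have tc: "\<tau> \<in> carrier_mat n n" unfolding tau by (rule spec_carrier[OF w(1)])
  have hY: "adj Y = Y" unfolding Ye by (rule adj_spec[OF w(1)])
  have npos: "n > 0"
  proof (rule ccontr)
    assume "\<not> n > 0"
    hence "trace \<rho> = 0" using rho unfolding trace_def by simp
    thus False using trpos by simp
  qed
  have dBpos: "dB > 0" using npos unfolding n_def by simp
  have dtnn: "0 \<le> dt k" for k unfolding dt_def using dBpos by (intro dnn) simp
  have ftnn: "0 \<le> ft k" for k unfolding ft_def by simp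
  have enn: "0 \<le> e i" if i: "i < n" for i
  proof -
    have "Re (map_vec cnj (col V i) \<bullet> (\<rho> *\<^sub>v col V i)) \<ge> 0"
      by (rule psdD(1)[OF psdr col_carrier_vec[OF i v(1)]])
    thus ?thesis unfolding re qf_col[OF V i] by simp
  qed
  define Q where "Q = (\<lambda>i. \<Sum>j<n. e j * (cmod ((adj V *\<^sub>v (Y *\<^sub>v col V i))$j))^2)"
  have qQ: "map_vec cnj (Y *\<^sub>v col V i) \<bullet> (\<rho> *\<^sub>v (Y *\<^sub>v col V i)) = complex_of_real (Q i)" if i: "i < n" for i
    unfolding Q_def re
    by (rule qf_spec[OF V mult_mat_vec_carrier[OF Yc col_carrier_vec[OF i v(1)]]])
  have Qnn: "0 \<le> Q i" for i unfolding Q_def by (intro sum_nonneg mult_nonneg_nonneg enn) auto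
  have Gam: "Gamma_C dA \<rho> \<sigma> = complex_of_real (\<Sum>i<n. e i * Q i)"
  proof -
    have "Gamma_C dA \<rho> \<sigma> = trace ((\<rho> * Y) * (\<rho> * Y))" unfolding Gamma_C_def Let_def Y_def ..
    also have "\<dots> = (\<Sum>i<n. complex_of_real (e i) * (map_vec cnj (Y *\<^sub>v col V i) \<bullet> (\<rho> *\<^sub>v (Y *\<^sub>v col V i))))"
      by (rule gamma_expand[OF V re Yc hY])
    also have "\<dots> = (\<Sum>i<n. complex_of_real (e i * Q i))"
      by (rule sum.cong[OF refl]) (simp add: qQ)
    finally show ?thesis by simp
  qed
  have Tr: "trace \<rho> = complex_of_real (\<Sum>i<n. e i)" unfolding re trace_spec[OF V] by simp
  define G where "G = (\<Sum>i<n. e i * Q i)"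
  define T where "T = (\<Sum>i<n. e i)"
  have ReG: "Re (Gamma_C dA \<rho> \<sigma>) = G" unfolding Gam G_def by simp
  have ReT: "Re (trace \<rho>) = T" unfolding Tr T_def by simp
  have Tpos: "T > 0" using trpos ReT by simp
  have key: "log 2 G - log 2 T \<le> l" if L: "loewner_le n \<rho> (complex_of_real (2 powr l) \<cdot>\<^sub>m \<tau>)" for l
  proof -
    define c where "c = 2 powr l"
    have cpos: "c > 0" unfolding c_def by simp
    have psdL: "psd n (complex_of_real c \<cdot>\<^sub>m \<tau> - \<rho>)" using L unfolding loewner_le_def c_def by auto
    have lw: "Re (map_vec cnj x \<bullet> (\<rho> *\<^sub>v x)) \<le> c * Re (map_vec cnj x \<bullet> (\<tau> *\<^sub>v x))"
      if x: "x \<in> carrier_vec n" for x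
      using psdD(1)[OF psdL x] unfolding qf_lin[OF tc rho x] by simp
    have Qle: "Q i \<le> c" if i: "i < n" for i
    proof -
      define x where "x = col V i"
      have x: "x \<in> carrier_vec n" unfolding x_def using col_carrier_vec[OF i v(1)] .
      define uu where "uu = adj W *\<^sub>v x"
      have uu: "uu \<in> carrier_vec n" unfolding uu_def using mult_mat_vec_carrier[OF w(2) x] .
      have Yx: "Y *\<^sub>v x = W *\<^sub>v (diag_real n ft *\<^sub>v uu)" unfolding Ye uu_def by (rule spec_mult_vec[OF W x])
      have dfu: "diag_real n ft *\<^sub>v uu \<in> carrier_vec n" using mult_mat_vec_carrier[OF diag_carrier uu] .
      have aYx: "adj W *\<^sub>v (Y *\<^sub>v x) = diag_real n ft *\<^sub>v uu" unfolding Yx by (rule adj_W_W_vec[OF W dfu])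
      have yxc: "Y *\<^sub>v x \<in> carrier_vec n" using mult_mat_vec_carrier[OF Yc x] .
      have qt: "map_vec cnj (Y *\<^sub>v x) \<bullet> (\<tau> *\<^sub>v (Y *\<^sub>v x))
          = complex_of_real (\<Sum>k<n. dt k * (cmod ((diag_real n ft *\<^sub>v uu)$k))^2)"
        unfolding tau aYx[symmetric] by (rule qf_spec[OF W yxc])
      have qt2: "(\<Sum>k<n. dt k * (cmod ((diag_real n ft *\<^sub>v uu)$k))^2) \<le> (\<Sum>k<n. (cmod (uu$k))^2)"
      proof (rule sum_mono)
        fix k assume "k \<in> {..<n}" hence k: "k < n" by simp
        have "(diag_real n ft *\<^sub>v uu)$k = complex_of_real (ft k) * uu$k"
          unfolding diag_mult_vec[OF uu] using k by simp
        hence "dt k * (cmod ((diag_real n ft *\<^sub>v uu)$k))^2 = (dt k * (ft k)^2) * (cmod (uu$k))^2"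
          by (simp add: norm_mult power_mult_distrib)
        also have "\<dots> \<le> 1 * (cmod (uu$k))^2"
          by (rule mult_right_mono) (use dft_le[of "d (k mod dB)"] in \<open>simp_all add: dt_def ft_def\<close>)
        finally show "dt k * (cmod ((diag_real n ft *\<^sub>v uu)$k))^2 \<le> (cmod (uu$k))^2" by simp
      qed
      have nrm: "(\<Sum>k<n. (cmod (uu$k))^2) = 1"
      proof -
        have 1: "map_vec cnj x \<bullet> ((W * diag_real n (\<lambda>_. 1) * adj W) *\<^sub>v x) = complex_of_real (\<Sum>k<n. 1 * (cmod (uu$k))^2)"
          unfolding uu_def by (rule qf_spec[OF W x])
        have 2: "map_vec cnj x \<bullet> ((V * diag_real n (\<lambda>_. 1) * adj V) *\<^sub>v x) = complex_of_real 1"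
          unfolding x_def by (rule qf_col[OF V i])
        have "(\<Sum>k<n. 1 * (cmod (uu$k))^2) = 1"
          using 1 2 unfolding spec_one[OF W] spec_one[OF V] by (metis of_real_eq_iff)
        thus ?thesis by simp
      qed
      have "Q i = Re (map_vec cnj (Y *\<^sub>v x) \<bullet> (\<rho> *\<^sub>v (Y *\<^sub>v x)))" using qQ[OF i] unfolding x_def by simp
      also have "\<dots> \<le> c * Re (map_vec cnj (Y *\<^sub>v x) \<bullet> (\<tau> *\<^sub>v (Y *\<^sub>v x)))" by (rule lw[OF yxc])
      also have "\<dots> \<le> c * 1"
        by (rule mult_left_mono) (use qt qt2 nrm cpos in simp_all)
      finally show ?thesis by simp
    qed
    have Gle: "G \<le> c * T" unfolding G_def T_def sum_distrib_left
      by (rule sum_mono) (use Qle enn in \<open>auto simp: mult.commute intro: mult_right_mono\<close>)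
    obtain i0 where i0: "i0 < n" and ei0: "e i0 > 0"
    proof -
      have "\<exists>i<n. e i > 0"
      proof (rule ccontr)
        assume "\<not> (\<exists>i<n. e i > 0)"
        hence "T \<le> 0" unfolding T_def by (intro sum_nonpos) auto
        thus False using Tpos by simp
      qed
      thus ?thesis using that by blast
    qed
    define x where "x = col V i0"
    have x: "x \<in> carrier_vec n" unfolding x_def using col_carrier_vec[OF i0 v(1)] .
    define uu where "uu = adj W *\<^sub>v x"
    define S where "S = (\<Sum>k<n. ft k * (cmod (uu$k))^2)"
    have qY: "map_vec cnj x \<bullet> (Y *\<^sub>v x) = complex_of_real S"
      unfolding S_def uu_def Ye by (rule qf_spec[OF W x])
    have Snn: "S \<ge> 0" unfolding S_def by (intro sum_nonneg mult_nonneg_nonneg ftnn) auto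
    have Spos: "S > 0"
    proof (rule ccontr)
      assume "\<not> S > 0"
      hence "S = 0" using Snn by simp
      hence z: "\<forall>k\<in>{..<n}. ft k * (cmod (uu$k))^2 = 0" unfolding S_def
        by (subst (asm) sum_nonneg_eq_0_iff) (auto intro: mult_nonneg_nonneg ftnn)
      have "(\<Sum>k<n. dt k * (cmod (uu$k))^2) = 0"
      proof (rule sum.neutral, rule ballI)
        fix k assume k: "k \<in> {..<n}"
        show "dt k * (cmod (uu$k))^2 = 0"
        proof (cases "dt k > 0")
          case True
          hence "ft k > 0" unfolding ft_def dt_def by simp
          moreover have "ft k * (cmod (uu $ k))^2 = 0" using z k by blast
          ultimately have "uu $ k = 0" by simp
          thus ?thesis by simp
        next
          case False
          hence "dt k = 0" using dtnn[of k] by simp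
          thus ?thesis by simp
        qed
      qed
      hence "map_vec cnj x \<bullet> (\<tau> *\<^sub>v x) = 0"
        unfolding tau using qf_spec[OF W x, of dt] unfolding uu_def by simp
      moreover have "map_vec cnj x \<bullet> (\<rho> *\<^sub>v x) = complex_of_real (e i0)"
        unfolding re x_def by (rule qf_col[OF V i0])
      ultimately have "e i0 \<le> c * 0" using lw[OF x] by simp
      thus False using ei0 by simp
    qed
    have Qi0: "e i0 * S^2 \<le> Q i0"
    proof -
      have ac: "(adj V *\<^sub>v (Y *\<^sub>v x)) $ i0 = complex_of_real S"
        using adj_mult_vec_index[OF v(1) mult_mat_vec_carrier[OF Yc x] i0] qY unfolding x_def by simp
      have "e i0 * (cmod ((adj V *\<^sub>v (Y *\<^sub>v x))$i0))^2 \<le> Q i0"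
        unfolding Q_def x_def
        by (rule member_le_sum[of i0 "{..<n}" "\<lambda>j. e j * (cmod ((adj V *\<^sub>v (Y *\<^sub>v col V i0))$j))^2"])
           (use i0 enn in \<open>auto intro: mult_nonneg_nonneg\<close>)
      thus ?thesis unfolding ac using Snn by simp
    qed
    have "e i0 * (e i0 * S^2) \<le> G"
    proof -
      have "e i0 * Q i0 \<le> G" unfolding G_def
        by (rule member_le_sum[of i0 "{..<n}" "\<lambda>i. e i * Q i"])
           (use i0 enn Qnn in \<open>auto intro: mult_nonneg_nonneg\<close>)
      moreover have "e i0 * (e i0 * S^2) \<le> e i0 * Q i0"
        by (rule mult_left_mono[OF Qi0]) (use ei0 in simp)
      ultimately show ?thesis by linarith
    qed
    moreover have "e i0 * (e i0 * S^2) > 0" using ei0 Spos by simp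
    ultimately have Gpos: "G > 0" by linarith
    have "log 2 G \<le> log 2 (c * T)" using Gle Gpos Tpos cpos by simp
    also have "\<dots> = log 2 c + log 2 T" using cpos Tpos by (rule log_mult_pos)
    also have "log 2 c = l" unfolding c_def by simp
    finally show ?thesis by simp
  qed
  have "ereal (log 2 G - log 2 T) \<le> D_max n \<rho> \<tau>"
    unfolding D_max_def
  proof (rule Inf_greatest)
    fix y assume "y \<in> {ereal l |l. loewner_le n \<rho> (complex_of_real (2 powr l) \<cdot>\<^sub>m \<tau>)}"
    then obtain l where y: "y = ereal l" and L: "loewner_le n \<rho> (complex_of_real (2 powr l) \<cdot>\<^sub>m \<tau>)" by auto
    show "ereal (log 2 G - log 2 T) \<le> y" unfolding y using key[OF L] by simp
  qed
  thus ?thesis unfolding ReG ReT \<tau>_def n_def .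
qed

end
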